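(* Let $k$ be an algebraically closed field of arbitrary characteristic and let $\mathcal{C}\subset\mathbb{P}^3$ be a quadric cone with vertex $v$. Fix an integer $d\ge 2$ and a point $q\in\mathcal{C}\setminus\{v\}$, and let $R_q\subset\mathcal{C}$ be the line spanned by $v$ and $q$. Then there is a smooth divisor $Y\in|\mathcal{O}_{\mathcal{C}}(d)|$ such that $v\notin Y$, $q\notin Y$, and $R_q$ meets $Y$ at a unique point.
   Context: $\mathcal{O}_{\mathcal{C}}(d)$ is the restriction of $\mathcal{O}_{\mathbb{P}^3}(d)$ to $\mathcal{C}$. *)

theory Defs
  imports "HOL-Analysis.Analysis" "HOL-Computational_Algebra.Polynomial" "HOL-Library.Numeral_Type"
begin

text \<open>Homogeneous forms of degree d in the four homogeneous coordinates x0..x3 of P^3,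
  represented by their coefficient function on exponent vectors (4 \<Rightarrow> nat).\<close>

type_synonym 'k form4 = "(4 \<Rightarrow> nat) \<Rightarrow> 'k"

definition monomials_deg :: "nat \<Rightarrow> (4 \<Rightarrow> nat) set" where
  "monomials_deg d = {m. (\<Sum>i\<in>UNIV. m i) = d}"

definition is_form :: "nat \<Rightarrow> 'k::field form4 \<Rightarrow> bool" where
  "is_form d F \<longleftrightarrow> (\<forall>m. m \<notin> monomials_deg d \<longrightarrow> F m = 0)"

definition evalf :: "nat \<Rightarrow> 'k::field form4 \<Rightarrow> 'k^4 \<Rightarrow> 'k" where
  "evalf d F x = (\<Sum>m\<in>monomials_deg d. F m * (\<Prod>i\<in>UNIV. (x $ i) ^ (m i)))"

definition pderiv_form :: "4 \<Rightarrow> 'k::field form4 \<Rightarrow> 'k form4" where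
  "pderiv_form i F = (\<lambda>m. of_nat (m i + 1) * F (m(i := m i + 1)))"

definition grad_form :: "nat \<Rightarrow> 'k::field form4 \<Rightarrow> 'k^4 \<Rightarrow> 'k^4" where
  "grad_form d F x = (\<chi> i. evalf (d - 1) (pderiv_form i F) x)"

definition std_cone :: "'k::field^4 \<Rightarrow> 'k" where
  "std_cone y = y $ 0 * y $ 1 + (y $ 2)^2"

text \<open>Q is a quadratic form defining a quadric cone: Q is projectively equivalent to the
  standard cone (over an algebraically closed field these are exactly the rank-3 quadrics).\<close>
definition quadric_cone_form :: "'k::field form4 \<Rightarrow> bool" where
  "quadric_cone_form Q \<longleftrightarrow> is_form 2 Q \<and>
     (\<exists>A::'k^4^4. invertible A \<and> (\<forall>x. evalf 2 Q x = std_cone (A *v x)))"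

definition is_vertex :: "'k::field form4 \<Rightarrow> 'k^4 \<Rightarrow> bool" where
  "is_vertex Q v \<longleftrightarrow> v \<noteq> 0 \<and> evalf 2 Q v = 0 \<and> grad_form 2 Q v = 0"

definition proportional :: "'k::field^4 \<Rightarrow> 'k^4 \<Rightarrow> bool" where
  "proportional x y \<longleftrightarrow> (\<exists>c. c \<noteq> 0 \<and> x = c *s y)"

text \<open>The divisor Y = C \<inter> V(F) (F a degree-d form) is smooth: at every point of Y the
  Jacobian of (Q,F) has rank 2 (Jacobian criterion).\<close>
definition smooth_divisor :: "'k::field form4 \<Rightarrow> nat \<Rightarrow> 'k form4 \<Rightarrow> bool" where
  "smooth_divisor Q d F \<longleftrightarrow>
     (\<forall>p. p \<noteq> 0 \<and> evalf 2 Q p = 0 \<and> evalf d F p = 0 \<longrightarrow>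
        (\<forall>a b. a *s grad_form 2 Q p + b *s grad_form d F p = 0 \<longrightarrow> a = 0 \<and> b = 0))"

text \<open>Affine cone over the projective line spanned by v and q.\<close>
definition span_line :: "'k::field^4 \<Rightarrow> 'k^4 \<Rightarrow> ('k^4) set" where
  "span_line v q = {a *s v + b *s q | a b. True}"

end

theory Submission
  imports Defs
begin


section \<open>Finiteness and polynomial functions\<close>

lemma monomials_deg_finite: "finite (monomials_deg d)"
proof -
  have "monomials_deg d \<subseteq> PiE UNIV (\<lambda>_. {..d})"
  proof
    fix m assume "m \<in> monomials_deg d"
    then have s: "(\<Sum>i\<in>UNIV. m i) = d" by (simp add: monomials_deg_def)
    have "\<forall>i. m i \<le> d"
    proof
      fix i
      have "m i \<le> (\<Sum>i\<in>UNIV. m i)" by (rule member_le_sum) auto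
      then show "m i \<le> d" using s by simp
    qed
    then show "m \<in> PiE UNIV (\<lambda>_. {..d})" by (auto simp: PiE_def extensional_def)
  qed
  moreover have "finite (PiE (UNIV::4 set) (\<lambda>_. {..d}))" by (intro finite_PiE) auto
  ultimately show ?thesis by (rule finite_subset)
qed

definition mono4 :: "(4 \<Rightarrow> nat) \<Rightarrow> 'k::field^4 \<Rightarrow> 'k" where
  "mono4 m x = (\<Prod>i\<in>UNIV. (x $ i) ^ (m i))"

definition pf :: "nat \<Rightarrow> ('k::field^4 \<Rightarrow> 'k) \<Rightarrow> bool" where
  "pf d f \<longleftrightarrow> (\<exists>F. is_form d F \<and> (\<forall>x. evalf d F x = f x))"

lemma pf_mono: "pf (sum m UNIV) (\<lambda>x. c * mono4 m x)"
proof -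
  define F where "F = (\<lambda>n. if n = m then c else (0::'a))"
  have "is_form (sum m UNIV) F" by (auto simp: is_form_def F_def monomials_deg_def)
  moreover have "evalf (sum m UNIV) F x = c * mono4 m x" for x
  proof -
    have "evalf (sum m UNIV) F x = (\<Sum>n\<in>monomials_deg (sum m UNIV). if n = m then c * mono4 n x else 0)"
      unfolding evalf_def mono4_def by (intro sum.cong) (auto simp: F_def)
    also have "\<dots> = c * mono4 m x"
      using monomials_deg_finite by (simp add: monomials_deg_def)
    finally show ?thesis .
  qed
  ultimately show ?thesis unfolding pf_def by blast
qed

lemma pf_zero: "pf d (\<lambda>x. 0)"
  unfolding pf_def by (rule exI[of _ "\<lambda>m. 0"]) (auto simp: is_form_def evalf_def)

lemma pf_add: assumes "pf d f" "pf d g" shows "pf d (\<lambda>x. f x + g x)"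
proof -
  obtain F G where F: "is_form d F" "\<And>x. evalf d F x = f x" and G: "is_form d G" "\<And>x. evalf d G x = g x"
    using assms unfolding pf_def by blast
  have "is_form d (\<lambda>m. F m + G m)" using F G by (auto simp: is_form_def)
  moreover have "evalf d (\<lambda>m. F m + G m) x = f x + g x" for x
    using F G by (simp add: evalf_def sum.distrib distrib_right)
  ultimately show ?thesis unfolding pf_def by blast
qed

lemma pf_scale: assumes "pf d f" shows "pf d (\<lambda>x. c * f x)"
proof -
  obtain F where F: "is_form d F" "\<And>x. evalf d F x = f x"
    using assms unfolding pf_def by blast
  have "is_form d (\<lambda>m. c * F m)" using F by (auto simp: is_form_def)
  moreover have "evalf d (\<lambda>m. c * F m) x = c * f x" for x
    unfolding F(2)[symmetric] evalf_def by (simp add: sum_distrib_left mult.assoc)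
  ultimately show ?thesis unfolding pf_def by blast
qed

lemma pf_sum: assumes "finite S" "\<And>i. i \<in> S \<Longrightarrow> pf d (f i)" shows "pf d (\<lambda>x. \<Sum>i\<in>S. f i x)"
  using assms
proof (induction S rule: finite_induct)
  case empty then show ?case by (simp add: pf_zero)
next
  case (insert a S)
  then show ?case by (simp add: pf_add)
qed

lemma pf_cong: "pf d f \<Longrightarrow> d = e \<Longrightarrow> (\<And>x. f x = g x) \<Longrightarrow> pf e g"
proof -
  assume "pf d f" "d = e" "\<And>x. f x = g x"
  then have "f = g" by auto
  with \<open>pf d f\<close> \<open>d = e\<close> show "pf e g" by simp
qed

lemma mono4_add: "mono4 (\<lambda>i. m i + n i) x = mono4 m x * mono4 n x"
  by (simp add: mono4_def power_add prod.distrib)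

lemma pf_mult: assumes "pf d f" "pf e g" shows "pf (d + e) (\<lambda>x. f x * g x)"
proof -
  obtain F where F: "is_form d F" "\<And>x. evalf d F x = f x"
    using assms unfolding pf_def by blast
  obtain G where G: "is_form e G" "\<And>x. evalf e G x = g x"
    using assms unfolding pf_def by blast
  have eq: "f x * g x = (\<Sum>m\<in>monomials_deg d. \<Sum>n\<in>monomials_deg e. (F m * G n) * mono4 (\<lambda>i. m i + n i) x)" for x
    unfolding F(2)[symmetric] G(2)[symmetric] evalf_def sum_product mono4_add
    by (simp add: mono4_def mult_ac)
  have "pf (d + e) (\<lambda>x. \<Sum>m\<in>monomials_deg d. \<Sum>n\<in>monomials_deg e. (F m * G n) * mono4 (\<lambda>i. m i + n i) x)"
  proof (intro pf_sum monomials_deg_finite)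
    fix m n assume "m \<in> monomials_deg d" "n \<in> monomials_deg e"
    then have "sum (\<lambda>i. m i + n i) UNIV = d + e" by (simp add: monomials_deg_def sum.distrib)
    then show "pf (d + e) (\<lambda>x. (F m * G n) * mono4 (\<lambda>i. m i + n i) x)"
      using pf_mono[of "\<lambda>i. m i + n i" "F m * G n"] by simp
  qed
  then show ?thesis by (rule pf_cong[OF _ refl]) (simp add: eq)
qed

lemma pf_one: "pf 0 (\<lambda>x. 1)"
  using pf_mono[of "\<lambda>i. 0" 1] by (simp add: mono4_def)

lemma pf_const: "pf 0 (\<lambda>x. c)"
  using pf_scale[OF pf_one, of c] by simp

lemma pf_pow: assumes "pf d f" shows "pf (n * d) (\<lambda>x. f x ^ n)"
proof (induction n)
  case 0 then show ?case using pf_one by simp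
next
  case (Suc n)
  from pf_mult[OF assms Suc] show ?case by (simp add: add.commute)
qed

lemma pf_coord: "pf 1 (\<lambda>x. x $ i)"
proof -
  have "sum (\<lambda>j. if j = i then 1 else 0) (UNIV::4 set) = (1::nat)" by simp
  moreover have "mono4 (\<lambda>j. if j = i then 1 else 0) x = x $ i" for x :: "'a::field^4"
  proof -
    have "mono4 (\<lambda>j. if j = i then 1 else 0) x = (\<Prod>j\<in>UNIV. if j = i then x $ j else 1)"
      unfolding mono4_def by (intro prod.cong) auto
    also have "\<dots> = x $ i" by simp
    finally show ?thesis .
  qed
  ultimately show ?thesis using pf_mono[of "\<lambda>j. if j = i then 1 else 0" 1]
    by (metis (no_types, lifting) mult_1 pf_cong)
qed

lemma pf_matvec: "pf 1 (\<lambda>x. (A *v x) $ i)"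
proof -
  have "pf 1 (\<lambda>x. \<Sum>j\<in>UNIV. A $ i $ j * x $ j)"
    by (intro pf_sum pf_scale pf_coord) auto
  then show ?thesis by (rule pf_cong) (auto simp: matrix_vector_mult_def)
qed



section \<open>Directional derivatives along lines\<close>

definition hasD :: "('k::field^4 \<Rightarrow> 'k) \<Rightarrow> 'k^4 \<Rightarrow> 'k^4 \<Rightarrow> 'k \<Rightarrow> bool" where
  "hasD f y k c \<longleftrightarrow> (\<exists>P. (\<forall>t. f (y + t *s k) = poly P t) \<and> coeff P 1 = c)"

lemma hasD_const: "hasD (\<lambda>x. a) y k 0"
  unfolding hasD_def by (rule exI[of _ "[:a:]"]) simp

lemma hasD_coord: "hasD (\<lambda>x. x $ i) y k (k $ i)"
  unfolding hasD_def by (rule exI[of _ "[:y $ i, k $ i:]"]) (simp add: algebra_simps)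

lemma hasD_add: "hasD f y k c1 \<Longrightarrow> hasD g y k c2 \<Longrightarrow> hasD (\<lambda>x. f x + g x) y k (c1 + c2)"
  unfolding hasD_def
  by (metis (no_types, lifting) coeff_add poly_add)

lemma hasD_minus: "hasD f y k c1 \<Longrightarrow> hasD (\<lambda>x. - f x) y k (- c1)"
  unfolding hasD_def
  by (metis (no_types, lifting) coeff_minus poly_minus)

lemma hasD_coeff0: "(\<forall>t. f (y + t *s k) = poly P t) \<Longrightarrow> coeff P 0 = f y"
  by (metis poly_0_coeff_0 vector_smult_lzero add.right_neutral)

lemma coeff_mult_1: "coeff (P * Q) 1 = coeff P 0 * coeff Q 1 + coeff P 1 * coeff Q 0"
  by (simp add: coeff_mult atMost_Suc add.commute)

lemma hasD_mult: "hasD f y k c1 \<Longrightarrow> hasD g y k c2 \<Longrightarrow> hasD (\<lambda>x. f x * g x) y k (f y * c2 + c1 * g y)"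
proof -
  assume "hasD f y k c1" "hasD g y k c2"
  then obtain P Q where P: "\<forall>t. f (y + t *s k) = poly P t" "coeff P 1 = c1"
    and Q: "\<forall>t. g (y + t *s k) = poly Q t" "coeff Q 1 = c2" unfolding hasD_def by blast
  have "\<forall>t. f (y + t *s k) * g (y + t *s k) = poly (P * Q) t" using P Q by simp
  moreover have "coeff (P * Q) 1 = f y * c2 + c1 * g y"
    using hasD_coeff0[OF P(1)] hasD_coeff0[OF Q(1)] P(2) Q(2) coeff_mult_1[of P Q] by simp
  ultimately show ?thesis unfolding hasD_def by blast
qed

lemma hasD_cmult: "hasD f y k c1 \<Longrightarrow> hasD (\<lambda>x. a * f x) y k (a * c1)"
  using hasD_mult[OF hasD_const] by fastforce

lemma hasD_cong: "hasD f y k c \<Longrightarrow> c = c' \<Longrightarrow> hasD f y k c'"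
  by simp

lemma hasD_pow: "hasD f y k c \<Longrightarrow> hasD (\<lambda>x. f x ^ n) y k (of_nat n * f y ^ (n - 1) * c)"
proof (induction n)
  case 0 then show ?case using hasD_const[of 1 y k] by simp
next
  case (Suc n)
  have "hasD (\<lambda>x. f x * f x ^ n) y k (f y * (of_nat n * f y ^ (n - 1) * c) + c * f y ^ n)"
    by (rule hasD_mult[OF Suc.prems Suc.IH[OF Suc.prems]])
  moreover have "f y * (of_nat n * f y ^ (n - 1) * c) + c * f y ^ n = of_nat (Suc n) * f y ^ (Suc n - 1) * c"
    by (cases n) (simp_all add: algebra_simps)
  ultimately show ?case by simp
qed

lemma hasD_sum: "finite S \<Longrightarrow> (\<And>i. i \<in> S \<Longrightarrow> hasD (f i) y k (c i)) \<Longrightarrow>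
   hasD (\<lambda>x. \<Sum>i\<in>S. f i x) y k (\<Sum>i\<in>S. c i)"
proof (induction S rule: finite_induct)
  case empty then show ?case using hasD_const[of 0 y k] by simp
next
  case (insert a S)
  then show ?case by (simp add: hasD_add)
qed

lemma hasD_prod: "finite S \<Longrightarrow> (\<And>i. i \<in> S \<Longrightarrow> hasD (f i) y k (c i)) \<Longrightarrow>
   hasD (\<lambda>x. \<Prod>i\<in>S. f i x) y k (\<Sum>j\<in>S. c j * (\<Prod>i\<in>S - {j}. f i y))"
proof (induction S rule: finite_induct)
  case empty then show ?case using hasD_const[of 1 y k] by simp
next
  case (insert a S)
  have h: "hasD (\<lambda>x. f a x * (\<Prod>i\<in>S. f i x)) y k
      (f a y * (\<Sum>j\<in>S. c j * (\<Prod>i\<in>S - {j}. f i y)) + c a * (\<Prod>i\<in>S. f i y))"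
    using insert by (intro hasD_mult) auto
  have "(\<Sum>j\<in>insert a S. c j * (\<Prod>i\<in>insert a S - {j}. f i y))
      = c a * (\<Prod>i\<in>S. f i y) + (\<Sum>j\<in>S. c j * (\<Prod>i\<in>insert a S - {j}. f i y))"
    using insert by (simp add: insert_Diff_if)
  also have "(\<Sum>j\<in>S. c j * (\<Prod>i\<in>insert a S - {j}. f i y)) = (\<Sum>j\<in>S. f a y * (c j * (\<Prod>i\<in>S - {j}. f i y)))"
  proof (intro sum.cong refl)
    fix j assume "j \<in> S"
    then have "insert a S - {j} = insert a (S - {j})" using insert by auto
    then show "c j * (\<Prod>i\<in>insert a S - {j}. f i y) = f a y * (c j * (\<Prod>i\<in>S - {j}. f i y))"
      using insert by (simp add: mult_ac)
  qed
  finally show ?case using h insert by (simp add: sum_distrib_left algebra_simps)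
qed

lemma hasD_comp: "hasD g (\<Phi> p) (\<Phi> h) c \<Longrightarrow> (\<And>t. \<Phi> (p + t *s h) = \<Phi> p + t *s \<Phi> h) \<Longrightarrow>
  hasD (\<lambda>x. g (\<Phi> x)) p h c"
  unfolding hasD_def by auto

lemma infinite_alg_closed: "infinite (UNIV :: 'k::alg_closed_field set)"
proof
  assume fin: "finite (UNIV :: 'k set)"
  define P :: "'k poly" where "P = (\<Prod>a\<in>UNIV. [:-a, 1:]) + 1"
  have dprod: "degree (\<Prod>a\<in>(UNIV::'k set). [:-a, 1:]) = card (UNIV :: 'k set)"
    by (subst degree_prod_sum_eq) auto
  have "card (UNIV :: 'k set) > 0" using fin by (simp add: card_gt_0_iff)
  then have "degree P > 0" unfolding P_def using dprod
    by (metis degree_add_eq_left degree_1)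
  then obtain x where "poly P x = 0" using alg_closed_imp_poly_has_root by blast
  moreover have "poly (\<Prod>a\<in>(UNIV::'k set). [:-a, 1:]) x = 0"
    using fin by (simp add: poly_prod prod_zero_iff)
  ultimately show False unfolding P_def by simp
qed

lemma hasD_unique: "hasD f y k (c1::'k::alg_closed_field) \<Longrightarrow> hasD f y k c2 \<Longrightarrow> c1 = c2"
proof -
  assume "hasD f y k c1" "hasD f y k c2"
  then obtain P Q where P: "\<forall>t. f (y + t *s k) = poly P t" "coeff P 1 = c1"
    and Q: "\<forall>t. f (y + t *s k) = poly Q t" "coeff Q 1 = c2" unfolding hasD_def by blast
  have "P = Q"
  proof (rule ccontr)
    assume "P \<noteq> Q"
    then have "P - Q \<noteq> 0" by simp
    then have "finite {x. poly (P - Q) x = 0}" by (rule poly_roots_finite)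
    moreover have "{x. poly (P - Q) x = 0} = UNIV" using P Q by auto
    ultimately show False using infinite_alg_closed by auto
  qed
  then show ?thesis using P Q by simp
qed



lemma sum_upd4: "sum (n(j := v)) (UNIV::4 set) + n j = sum n UNIV + (v::nat)"
proof -
  have a: "sum (n(j := v)) (UNIV::4 set) = v + sum (n(j := v)) (UNIV - {j})"
    by (subst sum.remove[of _ j]) auto
  have b: "sum n (UNIV::4 set) = n j + sum n (UNIV - {j})"
    by (subst sum.remove[of _ j]) auto
  have c: "sum (n(j := v)) (UNIV - {j}) = sum n (UNIV - {j})"
    by (intro sum.cong) auto
  show ?thesis using a b c by simp
qed

lemma prod_remove4: "(\<Prod>i\<in>(UNIV::4 set). f i) = f j * (\<Prod>i\<in>UNIV - {j}. f i)"
  by (subst prod.remove[of _ j]) auto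

lemma pderiv_eval:
  fixes F :: "'k::field form4"
  assumes d: "1 \<le> d"
  shows "evalf (d - 1) (pderiv_form j F) p =
    (\<Sum>m\<in>monomials_deg d. F m * (of_nat (m j) * (p $ j) ^ (m j - 1) * (\<Prod>i\<in>UNIV - {j}. (p $ i) ^ (m i))))"
proof -
  define T where "T = (\<lambda>m. F m * (of_nat (m j) * (p $ j) ^ (m j - 1) * (\<Prod>i\<in>UNIV - {j}. (p $ i) ^ (m i))))"
  define TS where "TS = monomials_deg d \<inter> {m. m j \<noteq> 0}"
  have "(\<Sum>m\<in>monomials_deg d. T m) = (\<Sum>m\<in>TS. T m)"
    by (rule sum.mono_neutral_right) (auto simp: TS_def T_def monomials_deg_finite)
  also have "evalf (d - 1) (pderiv_form j F) p = (\<Sum>m\<in>TS. T m)"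
    unfolding evalf_def
  proof (rule sum.reindex_bij_witness[where i="\<lambda>m. m(j := m j - 1)" and j="\<lambda>m. m(j := Suc (m j))"])
    fix b assume "b \<in> monomials_deg (d - 1)"
    then show "b(j := Suc (b j), j := (b(j := Suc (b j))) j - 1) = b" by auto
  next
    fix b assume b: "b \<in> monomials_deg (d - 1)"
    then have "sum b UNIV = d - 1" by (simp add: monomials_deg_def)
    moreover have "sum (b(j := Suc (b j))) UNIV + b j = sum b UNIV + Suc (b j)" by (rule sum_upd4)
    ultimately show "b(j := Suc (b j)) \<in> TS" using d by (simp add: TS_def monomials_deg_def)
  next
    fix a assume "a \<in> TS"
    then show "a(j := a j - 1, j := Suc ((a(j := a j - 1)) j)) = a" by (auto simp: TS_def)
  next
    fix a assume a: "a \<in> TS"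
    then have "sum a UNIV = d" "a j \<noteq> 0" by (auto simp: TS_def monomials_deg_def)
    moreover have "sum (a(j := a j - 1)) UNIV + a j = sum a UNIV + (a j - 1)" by (rule sum_upd4)
    ultimately show "a(j := a j - 1) \<in> monomials_deg (d - 1)" by (simp add: monomials_deg_def)
  next
    fix b assume b: "b \<in> monomials_deg (d - 1)"
    have pr: "(\<Prod>i\<in>UNIV - {j}. p $ i ^ (b(j := Suc (b j))) i) = (\<Prod>i\<in>UNIV - {j}. p $ i ^ b i)"
      by (intro prod.cong) auto
    show "T (b(j := Suc (b j))) = pderiv_form j F b * (\<Prod>i\<in>UNIV. p $ i ^ b i)"
      unfolding T_def pderiv_form_def pr
      by (subst prod_remove4[of _ j]) (simp add: mult_ac)
  qed
  finally show ?thesis unfolding T_def by simp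
qed

lemma hasD_mono4: "hasD (\<lambda>x. (\<Prod>i\<in>UNIV. (x $ i) ^ (m i))) p h
   (\<Sum>j\<in>UNIV. (of_nat (m j) * (p $ j) ^ (m j - 1) * h $ j) * (\<Prod>i\<in>UNIV - {j}. (p $ i) ^ (m i)))"
  by (intro hasD_prod hasD_pow hasD_coord) auto

lemma hasD_evalf:
  fixes F :: "'k::field form4"
  assumes d: "1 \<le> d"
  shows "hasD (evalf d F) p h (\<Sum>i\<in>UNIV. grad_form d F p $ i * h $ i)"
proof -
  have "hasD (\<lambda>x. \<Sum>m\<in>monomials_deg d. F m * (\<Prod>i\<in>UNIV. (x $ i) ^ (m i))) p h
     (\<Sum>m\<in>monomials_deg d. F m * (\<Sum>j\<in>UNIV. (of_nat (m j) * (p $ j) ^ (m j - 1) * h $ j) * (\<Prod>i\<in>UNIV - {j}. (p $ i) ^ (m i))))"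
    by (intro hasD_sum hasD_cmult hasD_mono4 monomials_deg_finite)
  moreover have "(\<Sum>m\<in>monomials_deg d. F m * (\<Sum>j\<in>UNIV. (of_nat (m j) * (p $ j) ^ (m j - 1) * h $ j) * (\<Prod>i\<in>UNIV - {j}. (p $ i) ^ (m i))))
     = (\<Sum>j\<in>UNIV. grad_form d F p $ j * h $ j)"
    unfolding grad_form_def vec_lambda_beta pderiv_eval[OF d]
    by (simp add: sum_distrib_left sum_distrib_right mult_ac sum.swap[of _ "monomials_deg d"])
  ultimately show ?thesis unfolding evalf_def[abs_def] by simp
qed



definition mk4 :: "'a \<Rightarrow> 'a \<Rightarrow> 'a \<Rightarrow> 'a \<Rightarrow> 'a^4" where
  "mk4 a0 a1 a2 a3 = (\<chi> i. if i = 0 then a0 else if i = 1 then a1 else if i = 2 then a2 else a3)"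

lemma mk4_nth [simp]: "mk4 a0 a1 a2 a3 $ 0 = a0" "mk4 a0 a1 a2 a3 $ 1 = a1"
  "mk4 a0 a1 a2 a3 $ 2 = a2" "mk4 a0 a1 a2 a3 $ 3 = a3"
  by (simp_all add: mk4_def)

lemma vec4_eq_iff: "(x::'a^4) = y \<longleftrightarrow> x$0 = y$0 \<and> x$1 = y$1 \<and> x$2 = y$2 \<and> x$3 = y$3"
proof -
  have "(\<forall>i::4. P i) \<longleftrightarrow> P 0 \<and> P 1 \<and> P 2 \<and> P 3" for P
  proof -
    have h4: "(4::4) = 0" by simp
    have "(\<forall>i::4. P i) \<longleftrightarrow> P 1 \<and> P 2 \<and> P 3 \<and> P 4" by (rule forall_4)
    then show ?thesis unfolding h4 by blast
  qed
  then show ?thesis by (simp add: vec_eq_iff)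
qed

definition gstd :: "'k::field \<Rightarrow> 'k \<Rightarrow> 'k \<Rightarrow> 'k \<Rightarrow> nat \<Rightarrow> 'k^4 \<Rightarrow> 'k" where
  "gstd a b c e n y = y$3^(n+2) + a * y$0^(n+1) * y$2 + c * y$2 * y$3^(n+1)
      + b * y$2 * (- y$1)^(n+1) + e * (- y$1)^(n+2)"

definition Dg :: "'k::field \<Rightarrow> 'k \<Rightarrow> 'k \<Rightarrow> 'k \<Rightarrow> nat \<Rightarrow> 'k^4 \<Rightarrow> 'k^4 \<Rightarrow> 'k" where
  "Dg a b c e n y k = of_nat (n+2) * y$3^(n+1) * k$3
     + a * (of_nat (n+1) * y$0^n * k$0 * y$2 + y$0^(n+1) * k$2)
     + c * (k$2 * y$3^(n+1) + y$2 * of_nat (n+1) * y$3^n * k$3)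
     + b * (k$2 * (- y$1)^(n+1) - y$2 * of_nat (n+1) * (- y$1)^n * k$1)
     - e * of_nat (n+2) * (- y$1)^(n+1) * k$1"

lemma hasD_gstd: "hasD (gstd a b c e n) y k (Dg a b c e n y k)"
  unfolding gstd_def[abs_def]
  apply (rule hasD_cong)
   apply (rule hasD_add hasD_mult hasD_pow hasD_minus hasD_coord hasD_const)+
  apply (simp add: Dg_def algebra_simps)
  done

definition DQs :: "'k::field^4 \<Rightarrow> 'k^4 \<Rightarrow> 'k" where
  "DQs y k = y$0 * k$1 + k$0 * y$1 + 2 * y$2 * k$2"

lemma hasD_std: "hasD std_cone y k (DQs y k)"
  unfolding std_cone_def[abs_def]
  apply (rule hasD_cong)
   apply (rule hasD_add hasD_mult hasD_pow hasD_minus hasD_coord hasD_const)+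
  apply (simp add: DQs_def algebra_simps)
  done

lemma subst_chart:
  fixes y :: "'k::field^4"
  assumes y0: "y$0 \<noteq> 0" and cone: "std_cone y = 0"
  defines "x \<equiv> y$2 / y$0" and "u \<equiv> y$3 / y$0"
  shows "gstd a b c e n y = y$0^(n+2) * (u^(n+2) + a * x + c * x * u^(n+1) + b * x * (x^2)^(n+1) + e * (x^2)^(n+2))"
    "Dg a b c e n y (mk4 0 (-2 * y$2) (y$0) 0) = y$0^(n+2) * (a + c * u^(n+1) + b * (x^2)^(n+1)
        + 2 * b * of_nat (n+1) * x * x * (x^2)^n + 2 * e * of_nat (n+2) * x * (x^2)^(n+1))"
    "Dg a b c e n y (mk4 0 0 0 1) = y$0^(n+1) * (of_nat (n+2) * u^(n+1) + c * of_nat (n+1) * x * u^n)"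
proof -
  have y2: "y$2 = y$0 * x" and y3: "y$3 = y$0 * u" using y0 by (simp_all add: x_def u_def)
  have y1: "- y$1 = y$0 * x^2"
  proof -
    have "y$0 * y$1 + (y$0 * x)^2 = 0" using cone y2 by (simp add: std_cone_def)
    then have "y$0 * (y$1 + y$0 * x^2) = 0" by (simp add: algebra_simps power2_eq_square)
    then have "y$1 + y$0 * x^2 = 0" using y0 by simp
    then show ?thesis by (simp add: neg_eq_iff_add_eq_0)
  qed
  show "gstd a b c e n y = y$0^(n+2) * (u^(n+2) + a * x + c * x * u^(n+1) + b * x * (x^2)^(n+1) + e * (x^2)^(n+2))"
    unfolding gstd_def y1 y2 y3 by (simp add: power_mult_distrib algebra_simps)
  show "Dg a b c e n y (mk4 0 (-2 * y$2) (y$0) 0) = y$0^(n+2) * (a + c * u^(n+1) + b * (x^2)^(n+1)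
        + 2 * b * of_nat (n+1) * x * x * (x^2)^n + 2 * e * of_nat (n+2) * x * (x^2)^(n+1))"
    unfolding Dg_def mk4_nth y1 y2 y3 by (simp add: power_mult_distrib algebra_simps)
  show "Dg a b c e n y (mk4 0 0 0 1) = y$0^(n+1) * (of_nat (n+2) * u^(n+1) + c * of_nat (n+1) * x * u^n)"
    unfolding Dg_def mk4_nth y1 y2 y3 by (simp add: power_mult_distrib algebra_simps)
qed



lemma caseB_core:
  fixes x u N :: "'k::field"
  assumes ch: "N + 1 = 0 \<or> N = 0"
    and f: "u^(n+2) + x + x * u^(n+1) + (x^2)^(n+2) = 0"
    and fx: "1 + u^(n+1) + 2 * (N + 1) * x * (x^2)^(n+1) = 0"
    and fu: "(N + 1) * u^(n+1) + N * x * u^n = 0"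
  shows False
  using ch
proof
  assume N: "N = 0"
  then have "u^(n+1) = 0" using fu by simp
  then have u: "u = 0" by auto
  define W where "W = x * (x^2)^(n+1)"
  have "(x^2)^(n+2) = x * W" by (simp add: W_def power2_eq_square)
  then have "x * (1 + W) = 0" using f u by (simp add: algebra_simps)
  moreover have w2: "1 + 2 * W = 0" using fx N u by (simp add: W_def algebra_simps)
  ultimately have "x = 0 \<or> 1 + W = 0" by simp
  then show False
  proof
    assume "x = 0" then have "W = 0" by (simp add: W_def)
    then show False using w2 by simp
  next
    assume w1: "1 + W = 0"
    have "W = (1 + 2 * W) - (1 + W)" by (simp add: algebra_simps)
    then have "W = 0" using w1 w2 by simp
    then show False using w1 by simp
  qed
next
  assume N: "N + 1 = 0"
  then have "1 + u^(n+1) = 0" using fx by simp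
  then have U: "u^(n+1) = -1" by (simp add: add_eq_0_iff)
  have "u \<noteq> 0"
  proof
    assume "u = 0" then have "u^(n+1) = 0" by simp
    with U show False by simp
  qed
  have "N = -1" using N by (simp add: add_eq_0_iff2)
  then have "x * u^n = 0" using fu N by simp
  then have "x = 0" using \<open>u \<noteq> 0\<close> by simp
  then have "u^(n+2) = 0" using f by simp
  then show False using \<open>u \<noteq> 0\<close> by simp
qed



lemma caseD_core:
  fixes x u N :: "'k::field"
  assumes N: "N \<noteq> 0" and N1: "N + 1 \<noteq> 0" and two: "(2::'k) \<noteq> 0"
    and f: "u^(n+2) + x + ((N+1)/N) * x * u^(n+1) + (1/(2*N^2)) * x * (x^2)^(n+1) = 0"
    and fx: "1 + ((N+1)/N) * u^(n+1) + (1/(2*N^2)) * (x^2)^(n+1) + 2 * (1/(2*N^2)) * N * x * x * (x^2)^n = 0"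
    and fu: "(N + 1) * u^(n+1) + ((N+1)/N) * N * x * u^n = 0"
  shows False
proof -
  define g where "g = (N+1)/N"
  define b where "b = 1/(2*N^2)"
  define S where "S = (x^2)^(n+1)"
  define U where "U = u^(n+1)"
  have gN: "g * N = N + 1" using N by (simp add: g_def)
  have S2: "x * x * (x^2)^n = S" by (simp add: S_def power2_eq_square)
  have fx': "1 + g * U + b * (1 + 2 * N) * S = 0"
  proof -
    have "1 + g * U + b * S + 2 * b * N * (x * x * (x^2)^n) = 0"
      using fx by (simp add: g_def b_def U_def S_def mult.assoc)
    then show ?thesis unfolding S2 by (simp add: algebra_simps)
  qed
  have f': "u * U + x + g * x * U + b * x * S = 0"
    using f by (simp add: g_def b_def U_def S_def)
  have eqN: "((N+1)/N) * N = N + 1" using N by simp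
  have "(N + 1) * (u^n * (u + x)) = 0"
    using fu[unfolded eqN] by (simp add: algebra_simps)
  then have "u^n * (u + x) = 0" using N1 by simp
  then have "u = 0 \<or> x = -u" by (auto simp: add_eq_0_iff add.commute)
  then show False
  proof
    assume u: "u = 0"
    then have U0: "U = 0" by (simp add: U_def)
    have "x * (1 + b * S) = 0" using f' u U0 by (simp add: algebra_simps)
    then have "x = 0 \<or> 1 + b * S = 0" by simp
    then show False
    proof
      assume "x = 0" then have "S = 0" by (simp add: S_def)
      then show False using fx' U0 by simp
    next
      assume bS: "1 + b * S = 0"
      have bS': "b * S = -1" using bS by (simp add: add_eq_0_iff)
      have "1 + g * U + b * (1 + 2 * N) * S = 1 + (1 + 2 * N) * (b * S)" using U0 by (simp add: algebra_simps)
      also have "\<dots> = - 2 * N" unfolding bS' by (simp add: algebra_simps)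
      finally have "1 + g * U + b * (1 + 2 * N) * S = - 2 * N" .
      then show False using fx' N two by simp
    qed
  next
    assume x: "x = -u"
    show False
    proof (cases "u = 0")
      case True
      then have "x = 0" "U = 0" using x by (simp_all add: U_def)
      then show False using fx' by (simp add: S_def)
    next
      case False
      have "(u^2)^(n+1) = (u^(n+1))^2" by (metis power_mult mult.commute)
      then have SU: "S = U^2" unfolding S_def U_def x by simp
      have UN0: "U \<noteq> 0" using False by (simp add: U_def)
      have "u * (U - 1 - g * U - b * U^2) = 0"
        using f' unfolding x SU by (simp add: algebra_simps power2_eq_square)
      then have e1: "U - 1 - g * U - b * U^2 = 0" using False by simp
      have e2: "1 + g * U + b * (1 + 2 * N) * U^2 = 0" using fx' SU by simp
      have "U * (1 + 2 * N * b * U) = (U - 1 - g * U - b * U^2) + (1 + g * U + b * (1 + 2 * N) * U^2)"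
        by (simp add: algebra_simps power2_eq_square)
      then have "U * (1 + 2 * N * b * U) = 0" using e1 e2 by simp
      then have "1 + 2 * N * b * U = 0" using UN0 by simp
      then have "1 + U / N = 0" using N two by (simp add: b_def power2_eq_square field_simps)
      then have UN: "U = - N" using N by (simp add: field_simps add_eq_0_iff)
      have "1 + g * U + b * (1 + 2 * N) * U^2 = 1 / 2"
        unfolding UN using N two gN by (simp add: b_def g_def field_simps power2_eq_square)
      then show False using e2 two by simp
    qed
  qed
qed



definition params_ok :: "'k::field \<Rightarrow> 'k \<Rightarrow> 'k \<Rightarrow> 'k \<Rightarrow> nat \<Rightarrow> bool" where
  "params_ok a b c e n \<longleftrightarrow>
     (let N = (of_nat (n+1) :: 'k) in
      (a = 1 \<and> b = 0 \<and> c = 1 \<and> e = 1 \<and> (N + 1 = 0 \<or> N = 0)) \<or>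
      (a = 1 \<and> b = 1/(2*N^2) \<and> c = (N+1)/N \<and> e = 0 \<and> N \<noteq> 0 \<and> N + 1 \<noteq> 0 \<and> (2::'k) \<noteq> 0))"

lemma of_nat_n2: "(of_nat (n+2) :: 'k::field) = of_nat (n+1) + 1" by simp

lemma chart0_contra:
  fixes y :: "'k::field^4"
  assumes P: "params_ok a b c e n"
    and y0: "y$0 \<noteq> 0" and cone: "std_cone y = 0" and g: "gstd a b c e n y = 0"
    and d1: "Dg a b c e n y (mk4 0 (-2 * y$2) (y$0) 0) = 0"
    and d2: "Dg a b c e n y (mk4 0 0 0 1) = 0"
  shows False
proof -
  define x where "x = y$2 / y$0"
  define u where "u = y$3 / y$0"
  define N where "N = (of_nat (n+1) :: 'k)"
  note S = subst_chart[OF y0 cone, of a b c e n, folded x_def u_def, unfolded of_nat_n2, folded N_def]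
  have f: "u^(n+2) + a * x + c * x * u^(n+1) + b * x * (x^2)^(n+1) + e * (x^2)^(n+2) = 0"
    using S(1) g y0 by simp
  have fx: "a + c * u^(n+1) + b * (x^2)^(n+1) + 2 * b * N * x * x * (x^2)^n + 2 * e * (N + 1) * x * (x^2)^(n+1) = 0"
    using S(2) d1 y0 by simp
  have fu: "(N + 1) * u^(n+1) + c * N * x * u^n = 0"
    using S(3) d2 y0 by simp
  from P[unfolded params_ok_def Let_def, folded N_def] show False
  proof
    assume h: "a = 1 \<and> b = 0 \<and> c = 1 \<and> e = 1 \<and> (N + 1 = 0 \<or> N = 0)"
    show False
    proof (rule caseB_core[where N=N and n=n and u=u and x=x])
      show "N + 1 = 0 \<or> N = 0" using h by simp
      show "u^(n+2) + x + x * u^(n+1) + (x^2)^(n+2) = 0" using f h by simp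
      show "1 + u^(n+1) + 2 * (N + 1) * x * (x^2)^(n+1) = 0" using fx h by simp
      show "(N + 1) * u^(n+1) + N * x * u^n = 0" using fu h by simp
    qed
  next
    assume h: "a = 1 \<and> b = 1/(2*N^2) \<and> c = (N+1)/N \<and> e = 0 \<and> N \<noteq> 0 \<and> N + 1 \<noteq> 0 \<and> (2::'k) \<noteq> 0"
    show False
    proof (rule caseD_core[where N=N and n=n and u=u and x=x])
      show "N \<noteq> 0" "N + 1 \<noteq> 0" "(2::'k) \<noteq> 0" using h by simp_all
      show "u^(n+2) + x + ((N+1)/N) * x * u^(n+1) + (1/(2*N^2)) * x * (x^2)^(n+1) = 0"
        using f h by simp
      show "1 + ((N+1)/N) * u^(n+1) + (1/(2*N^2)) * (x^2)^(n+1) + 2 * (1/(2*N^2)) * N * x * x * (x^2)^n = 0"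
        using fx h by simp
      show "(N + 1) * u^(n+1) + ((N+1)/N) * N * x * u^n = 0"
        using fu h by (simp add: mult.assoc)
    qed
  qed
qed

lemma zero4: "(y::'k::field^4) = 0 \<longleftrightarrow> y$0 = 0 \<and> y$1 = 0 \<and> y$2 = 0 \<and> y$3 = 0"
  by (simp add: vec4_eq_iff)

lemma std_smooth:
  fixes y :: "'k::field^4"
  assumes P: "params_ok a b c e n"
    and ynz: "y \<noteq> 0" and cone: "std_cone y = 0" and g: "gstd a b c e n y = 0"
    and lin: "\<And>k. \<alpha> * DQs y k + \<beta> * Dg a b c e n y k = 0"
  shows "\<alpha> = 0 \<and> \<beta> = 0"
proof -
  define N where "N = (of_nat (n+1) :: 'k)"
  have P': "(a = 1 \<and> b = 0 \<and> c = 1 \<and> e = 1 \<and> (N + 1 = 0 \<or> N = 0)) \<or>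
      (a = 1 \<and> b = 1/(2*N^2) \<and> c = (N+1)/N \<and> e = 0 \<and> N \<noteq> 0 \<and> N + 1 \<noteq> 0 \<and> (2::'k) \<noteq> 0)"
    using P unfolding params_ok_def Let_def N_def by simp
  have y01: "y$0 \<noteq> 0 \<or> y$1 \<noteq> 0"
  proof (rule ccontr)
    assume "\<not> (y$0 \<noteq> 0 \<or> y$1 \<noteq> 0)"
    then have h: "y$0 = 0" "y$1 = 0" by auto
    then have "(y$2)^2 = 0" using cone by (simp add: std_cone_def)
    then have h2: "y$2 = 0" by simp
    then have "y$3^(n+2) = 0" using g h by (simp add: gstd_def)
    then have "y$3 = 0" by auto
    then show False using ynz h h2 zero4 by blast
  qed
  have "\<exists>k. DQs y k = 0 \<and> Dg a b c e n y k \<noteq> 0"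
  proof (cases "y$0 = 0")
    case False
    show ?thesis
    proof (rule ccontr)
      assume "\<not> ?thesis"
      then have "\<And>k. DQs y k = 0 \<Longrightarrow> Dg a b c e n y k = 0" by blast
      moreover have "DQs y (mk4 0 (-2 * y$2) (y$0) 0) = 0" "DQs y (mk4 0 0 0 1) = 0"
        by (simp_all add: DQs_def algebra_simps)
      ultimately have "Dg a b c e n y (mk4 0 (-2 * y$2) (y$0) 0) = 0" "Dg a b c e n y (mk4 0 0 0 1) = 0"
        by auto
      then show False using chart0_contra[OF P False cone g] by blast
    qed
  next
    case True
    then have y1: "y$1 \<noteq> 0" using y01 by simp
    have "(y$2)^2 = 0" using cone True by (simp add: std_cone_def)
    then have y2: "y$2 = 0" by simp
    have dq: "DQs y (mk4 0 0 1 0) = 0" using y2 by (simp add: DQs_def)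
    have dg: "Dg a b c e n y (mk4 0 0 1 0) = c * y$3^(n+1) + b * (- y$1)^(n+1)"
      using True y2 by (simp add: Dg_def)
    have gg: "y$3^(n+2) + e * (- y$1)^(n+2) = 0" using g True y2 by (simp add: gstd_def)
    have "Dg a b c e n y (mk4 0 0 1 0) \<noteq> 0"
      using P'
    proof
      assume h: "a = 1 \<and> b = 0 \<and> c = 1 \<and> e = 1 \<and> (N + 1 = 0 \<or> N = 0)"
      show ?thesis
      proof
        assume "Dg a b c e n y (mk4 0 0 1 0) = 0"
        then have "y$3^(n+1) = 0" using dg h by simp
        then have "y$3 = 0" by auto
        then have "(- y$1)^(n+2) = 0" using gg h by simp
        then show False using y1 by simp
      qed
    next
      assume h: "a = 1 \<and> b = 1/(2*N^2) \<and> c = (N+1)/N \<and> e = 0 \<and> N \<noteq> 0 \<and> N + 1 \<noteq> 0 \<and> (2::'k) \<noteq> 0"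
      then have "y$3^(n+2) = 0" using gg by simp
      then have "y$3 = 0" by auto
      then show ?thesis using dg h y1 by simp
    qed
    then show ?thesis using dq by blast
  qed
  then obtain k where k: "DQs y k = 0" "Dg a b c e n y k \<noteq> 0" by blast
  have "\<beta> = 0" using lin[of k] k by simp
  moreover have "\<alpha> * y$1 = 0" "\<alpha> * y$0 = 0"
    using lin[of "mk4 1 0 0 0"] lin[of "mk4 0 1 0 0"] \<open>\<beta> = 0\<close> by (simp_all add: DQs_def)
  then have "\<alpha> = 0" using y01 by auto
  ultimately show ?thesis by simp
qed



lemma params_exist: "\<exists>a b c e. params_ok (a::'k::field) b c e n"
proof -
  define N where "N = (of_nat (n+1) :: 'k)"
  show ?thesis
  proof (cases "N + 1 = 0 \<or> N = 0")
    case True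
    then have "params_ok (1::'k) 0 1 1 n" unfolding params_ok_def Let_def N_def[symmetric] by simp
    then show ?thesis by blast
  next
    case False
    have two: "(2::'k) \<noteq> 0"
    proof
      assume t: "(2::'k) = 0"
      have "even (n+1) \<or> even (n+2)" by auto
      then obtain m where m: "n + 1 = 2 * m \<or> n + 2 = 2 * m" by (metis evenE)
      have z: "(of_nat (2 * m) :: 'k) = 0" using t by simp
      have "(of_nat (n+2) :: 'k) = N + 1" by (simp add: N_def)
      from m show False
      proof
        assume "n + 1 = 2 * m"
        then have "N = 0" using z by (simp add: N_def)
        then show False using False by simp
      next
        assume "n + 2 = 2 * m"
        then have "N + 1 = 0" using z \<open>(of_nat (n+2) :: 'k) = N + 1\<close> by metis
        then show False using False by simp
      qed
    qed
    then have "params_ok (1::'k) (1/(2*N^2)) ((N+1)/N) 0 n"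
      unfolding params_ok_def Let_def N_def[symmetric] using False by simp
    then show ?thesis by blast
  qed
qed

lemma sum4: "sum f (UNIV::4 set) = f 0 + f 1 + f 2 + f 3"
proof -
  have h4: "(4::4) = 0" by simp
  show ?thesis using sum_4[of f] unfolding h4 by (simp add: ac_simps)
qed

definition dot4 :: "'a::semiring_1^4 \<Rightarrow> 'a^4 \<Rightarrow> 'a" where
  "dot4 r y = r$0 * y$0 + r$1 * y$1 + r$2 * y$2 + r$3 * y$3"

lemma mv4: "(mk4 r0 r1 r2 r3) *v y = mk4 (dot4 r0 y) (dot4 r1 y) (dot4 r2 y) (dot4 r3 y)"
  by (simp add: vec4_eq_iff matrix_vector_mult_def sum4 dot4_def)

lemma mv_add_smult: "(M::'a::comm_ring_1^4^4) *v (x + t *s h) = M *v x + t *s (M *v h)"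
  by (simp add: vec_eq_iff matrix_vector_mult_def sum.distrib sum_distrib_left algebra_simps)

lemma mv_lin2: "(M::'a::comm_ring_1^4^4) *v (s *s x + t *s h) = s *s (M *v x) + t *s (M *v h)"
  by (simp add: vec_eq_iff matrix_vector_mult_def sum.distrib sum_distrib_left algebra_simps)

lemma mv_smult: "(M::'a::comm_ring_1^4^4) *v (c *s x) = c *s (M *v x)"
  by (simp add: vec_eq_iff matrix_vector_mult_def sum_distrib_left algebra_simps)

lemma mv_zero: "(M::'a::comm_ring_1^4^4) *v 0 = 0"
  by (simp add: vec_eq_iff matrix_vector_mult_def)

lemma normalize:
  fixes z :: "'k::field^4"
  assumes cone: "std_cone z = 0" and nz: "\<not> (z$0 = 0 \<and> z$1 = 0 \<and> z$2 = 0)"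
  shows "\<exists>M Mi lam. (\<forall>y. M *v (Mi *v y) = y) \<and> (\<forall>y. Mi *v (M *v y) = y) \<and>
     (\<forall>y. std_cone (M *v y) = std_cone y) \<and> (\<forall>s. M *v mk4 0 0 0 s = mk4 0 0 0 s) \<and>
     M *v z = mk4 lam 0 0 1 \<and> lam \<noteq> 0"
proof (cases "z$0 = 0")
  case False
  define aa where "aa = z$2 / z$0"
  define ka where "ka = (1 - z$3) / z$0"
  define M :: "'k^4^4" where "M = mk4 (mk4 1 0 0 0) (mk4 (- (aa^2)) 1 (2*aa) 0) (mk4 (-aa) 0 1 0) (mk4 ka 0 0 1)"
  define Mi :: "'k^4^4" where "Mi = mk4 (mk4 1 0 0 0) (mk4 (- (aa^2)) 1 (-2*aa) 0) (mk4 aa 0 1 0) (mk4 (-ka) 0 0 1)"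
  have 1: "\<forall>y. M *v (Mi *v y) = y"
    by (simp add: M_def Mi_def mv4 dot4_def vec4_eq_iff algebra_simps power2_eq_square)
  have 2: "\<forall>y. Mi *v (M *v y) = y"
    by (simp add: M_def Mi_def mv4 dot4_def vec4_eq_iff algebra_simps power2_eq_square)
  have 3: "\<forall>y. std_cone (M *v y) = std_cone y"
    by (simp add: M_def mv4 dot4_def std_cone_def algebra_simps power2_eq_square)
  have 4: "\<forall>s. M *v mk4 0 0 0 s = mk4 0 0 0 s"
    by (simp add: M_def mv4 dot4_def)
  have z1: "z$1 = - ((z$2)^2) / z$0" using cone False
    by (simp add: std_cone_def field_simps eq_neg_iff_add_eq_0 algebra_simps)
  have 5: "M *v z = mk4 (z$0) 0 0 1"
    using False by (simp add: M_def mv4 dot4_def vec4_eq_iff z1 aa_def ka_def field_simps power2_eq_square)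
  show ?thesis using 1 2 3 4 5 False by blast
next
  case True
  then have "(z$2)^2 = 0" using cone by (simp add: std_cone_def)
  then have z2: "z$2 = 0" by simp
  then have z1: "z$1 \<noteq> 0" using nz True by simp
  define ka where "ka = (1 - z$3) / z$1"
  define M :: "'k^4^4" where "M = mk4 (mk4 0 1 0 0) (mk4 1 0 0 0) (mk4 0 0 1 0) (mk4 0 ka 0 1)"
  define Mi :: "'k^4^4" where "Mi = mk4 (mk4 0 1 0 0) (mk4 1 0 0 0) (mk4 0 0 1 0) (mk4 (-ka) 0 0 1)"
  have 1: "\<forall>y. M *v (Mi *v y) = y"
    by (simp add: M_def Mi_def mv4 dot4_def vec4_eq_iff algebra_simps)
  have 2: "\<forall>y. Mi *v (M *v y) = y"
    by (simp add: M_def Mi_def mv4 dot4_def vec4_eq_iff algebra_simps)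
  have 3: "\<forall>y. std_cone (M *v y) = std_cone y"
    by (simp add: M_def mv4 dot4_def std_cone_def algebra_simps)
  have 4: "\<forall>s. M *v mk4 0 0 0 s = mk4 0 0 0 s"
    by (simp add: M_def mv4 dot4_def)
  have 5: "M *v z = mk4 (z$1) 0 0 1"
    using z1 by (simp add: M_def mv4 dot4_def vec4_eq_iff True z2 ka_def field_simps)
  show ?thesis using 1 2 3 4 5 z1 by blast
qed

lemma pf_gstd:
  assumes Phi: "\<And>i. pf 1 (\<lambda>x. \<Phi> x $ i)"
  shows "pf (n+2) (\<lambda>x. gstd a b c e n (\<Phi> x))"
proof -
  have p3: "pf (n+2) (\<lambda>x. \<Phi> x $ 3 ^ (n+2))" using pf_pow[OF Phi[of 3], of "n+2"] by simp
  have p0: "pf (n+2) (\<lambda>x. a * \<Phi> x $ 0 ^ (n+1) * \<Phi> x $ 2)"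
    using pf_mult[OF pf_scale[OF pf_pow[OF Phi[of 0], of "n+1"], of a] Phi[of 2]] by simp
  have p2: "pf (n+2) (\<lambda>x. c * \<Phi> x $ 2 * \<Phi> x $ 3 ^ (n+1))"
    using pf_mult[OF pf_scale[OF Phi[of 2], of c] pf_pow[OF Phi[of 3], of "n+1"]] by simp
  have m1: "pf 1 (\<lambda>x. - \<Phi> x $ 1)" using pf_scale[OF Phi[of 1], of "-1"] by simp
  have p1: "pf (n+2) (\<lambda>x. b * \<Phi> x $ 2 * (- \<Phi> x $ 1) ^ (n+1))"
    using pf_mult[OF pf_scale[OF Phi[of 2], of b] pf_pow[OF m1, of "n+1"]] by simp
  have p4: "pf (n+2) (\<lambda>x. e * (- \<Phi> x $ 1) ^ (n+2))"
    using pf_scale[OF pf_pow[OF m1, of "n+2"], of e] by simp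
  show ?thesis unfolding gstd_def
    by (intro pf_add p0 p1 p2 p3 p4)
qed



theorem theorem4p6:
  fixes Q :: "'k::alg_closed_field form4"
    and v q :: "'k^4"
    and d :: nat
  assumes cone: "quadric_cone_form Q"
    and vertex: "is_vertex Q v"
    and d2: "d \<ge> 2"
    and q_nz: "q \<noteq> 0"
    and q_on: "evalf 2 Q q = 0"
    and q_not_v: "\<not> proportional q v"
  shows "\<exists>F :: 'k form4. is_form d F \<and>
           smooth_divisor Q d F \<and>
           evalf d F v \<noteq> 0 \<and> evalf d F q \<noteq> 0 \<and>
           (\<exists>p \<in> span_line v q. p \<noteq> 0 \<and> evalf 2 Q p = 0 \<and> evalf d F p = 0 \<and>
              (\<forall>p' \<in> span_line v q. p' \<noteq> 0 \<and> evalf 2 Q p' = 0 \<and> evalf d F p' = 0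
                   \<longrightarrow> proportional p' p))"
proof -
  obtain n where dn: "d = n + 2" using d2 by (metis add.commute le_add_diff_inverse)
  obtain A :: "'k^4^4" where Ainv: "invertible A" and QA: "\<And>x. evalf 2 Q x = std_cone (A *v x)"
    using cone unfolding quadric_cone_form_def by blast
  obtain A' :: "'k^4^4" where AA': "A ** A' = mat 1" "A' ** A = mat 1"
    using Ainv unfolding invertible_def by blast
  have AA'1: "A *v (A' *v y) = y" for y by (simp add: matrix_vector_mul_assoc AA')
  have AA'2: "A' *v (A *v y) = y" for y by (simp add: matrix_vector_mul_assoc AA')
  have Qfun: "evalf 2 Q = (\<lambda>x. std_cone (A *v x))" using QA by auto
  have DQ: "(\<Sum>i\<in>UNIV. grad_form 2 Q p $ i * h $ i) = DQs (A *v p) (A *v h)" for p h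
  proof -
    have "hasD (evalf 2 Q) p h (\<Sum>i\<in>UNIV. grad_form 2 Q p $ i * h $ i)" by (rule hasD_evalf) simp
    moreover have "hasD (evalf 2 Q) p h (DQs (A *v p) (A *v h))"
      unfolding Qfun by (rule hasD_comp[OF hasD_std]) (simp add: mv_add_smult)
    ultimately show ?thesis by (rule hasD_unique)
  qed
  define yv where "yv = A *v v"
  have v0: "v \<noteq> 0" "evalf 2 Q v = 0" "grad_form 2 Q v = 0" using vertex unfolding is_vertex_def by auto
  have DQv: "DQs yv k = 0" for k
    using DQ[of v "A' *v k"] v0(3) by (simp add: yv_def AA'1)
  have yv0: "yv$0 = 0" using DQv[of "mk4 0 1 0 0"] by (simp add: DQs_def)
  have yv1: "yv$1 = 0" using DQv[of "mk4 1 0 0 0"] by (simp add: DQs_def)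
  have "std_cone yv = 0" unfolding yv_def using v0(2) QA[of v] by (simp only:)
  then have "(yv$2)^2 = 0" using yv0 by (simp add: std_cone_def)
  then have yv2: "yv$2 = 0" by simp
  define cv where "cv = yv$3"
  have yvf: "yv = mk4 0 0 0 cv" using yv0 yv1 yv2 by (simp add: vec4_eq_iff cv_def)
  have cv0: "cv \<noteq> 0"
  proof
    assume "cv = 0" then have "yv = 0" using yvf by (simp add: vec4_eq_iff)
    then have "v = 0" using AA'2[of v] by (simp add: yv_def mv_zero)
    then show False using v0 by simp
  qed
  define z where "z = A *v q"
  have zc: "std_cone z = 0" unfolding z_def using q_on QA[of q] by (simp only:)
  have znz: "\<not> (z$0 = 0 \<and> z$1 = 0 \<and> z$2 = 0)"
  proof
    assume h: "z$0 = 0 \<and> z$1 = 0 \<and> z$2 = 0"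
    have zf: "z = (z$3 / cv) *s yv" using h cv0 by (simp add: vec4_eq_iff yvf)
    have qf: "q = (z$3 / cv) *s v"
    proof -
      have "q = A' *v z" using AA'2[of q] by (simp add: z_def)
      also have "\<dots> = (z$3 / cv) *s (A' *v yv)" by (subst zf) (simp add: mv_smult)
      also have "\<dots> = (z$3 / cv) *s v" by (simp add: yv_def AA'2)
      finally show ?thesis .
    qed
    have "z$3 \<noteq> 0"
    proof
      assume "z$3 = 0" then have "q = 0" using qf by (simp add: vec_eq_iff)
      then show False using q_nz by simp
    qed
    then have "proportional q v" unfolding proportional_def using qf cv0
      by (intro exI[of _ "z$3 / cv"]) simp
    then show False using q_not_v by simp
  qed
  obtain M Mi lam where MM: "\<And>y. M *v (Mi *v y) = y" "\<And>y. Mi *v (M *v y) = y"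
    and Mcone: "\<And>y. std_cone (M *v y) = std_cone y" and Me3: "\<And>s. M *v mk4 0 0 0 s = mk4 0 0 0 s"
    and Mz: "M *v z = mk4 lam 0 0 1" and lam0: "lam \<noteq> 0"
    using normalize[OF zc znz] by blast
  define Phi where "Phi = (\<lambda>x. M *v (A *v x))"
  define Phii where "Phii = (\<lambda>y. A' *v (Mi *v y))"
  have PP1: "Phi (Phii y) = y" for y by (simp add: Phi_def Phii_def AA'1 MM)
  have PP2: "Phii (Phi x) = x" for x by (simp add: Phi_def Phii_def AA'2 MM)
  have Plin: "Phi (x + t *s h) = Phi x + t *s Phi h" for x t h by (simp add: Phi_def mv_add_smult)
  have Plin2: "Phi (s *s x + t *s h) = s *s Phi x + t *s Phi h" for s x t h by (simp add: Phi_def mv_lin2)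
  have Pcone: "std_cone (Phi x) = evalf 2 Q x" for x by (simp add: Phi_def Mcone QA)
  have Pv: "Phi v = mk4 0 0 0 cv" by (simp add: Phi_def yv_def[symmetric] yvf Me3)
  have Pq: "Phi q = mk4 lam 0 0 1" by (simp add: Phi_def z_def[symmetric] Mz)
  have P0: "Phi x \<noteq> 0" if "x \<noteq> 0" for x
  proof
    assume "Phi x = 0" then have "Phii (Phi x) = 0" by (simp add: Phii_def mv_zero)
    then show False using PP2[of x] that by simp
  qed
  have Ppf: "pf 1 (\<lambda>x. Phi x $ i)" for i
  proof -
    have "pf 1 (\<lambda>x. \<Sum>j\<in>UNIV. M $ i $ j * (A *v x) $ j)"
      by (intro pf_sum pf_scale pf_matvec) auto
    then show ?thesis by (rule pf_cong) (auto simp: Phi_def matrix_vector_mult_def)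
  qed
  obtain a b c e where par: "params_ok (a::'k) b c e n" using params_exist by blast
  obtain F where Fform: "is_form (n+2) F" and Fev: "\<And>x. evalf (n+2) F x = gstd a b c e n (Phi x)"
    using pf_gstd[OF Ppf, of n a b c e] unfolding pf_def by blast
  have Ffun: "evalf (n+2) F = (\<lambda>x. gstd a b c e n (Phi x))" using Fev by auto
  have Qfun': "evalf 2 Q = (\<lambda>x. std_cone (Phi x))" using Pcone by auto
  have DF: "(\<Sum>i\<in>UNIV. grad_form (n+2) F p $ i * h $ i) = Dg a b c e n (Phi p) (Phi h)" for p h
  proof -
    have "hasD (evalf (n+2) F) p h (\<Sum>i\<in>UNIV. grad_form (n+2) F p $ i * h $ i)" by (rule hasD_evalf) simp
    moreover have "hasD (evalf (n+2) F) p h (Dg a b c e n (Phi p) (Phi h))"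
      unfolding Ffun by (rule hasD_comp[OF hasD_gstd]) (simp add: Plin)
    ultimately show ?thesis by (rule hasD_unique)
  qed
  have DQ': "(\<Sum>i\<in>UNIV. grad_form 2 Q p $ i * h $ i) = DQs (Phi p) (Phi h)" for p h
  proof -
    have "hasD (evalf 2 Q) p h (\<Sum>i\<in>UNIV. grad_form 2 Q p $ i * h $ i)" by (rule hasD_evalf) simp
    moreover have "hasD (evalf 2 Q) p h (DQs (Phi p) (Phi h))"
      unfolding Qfun' by (rule hasD_comp[OF hasD_std]) (simp add: Plin)
    ultimately show ?thesis by (rule hasD_unique)
  qed
  have smooth: "smooth_divisor Q d F"
    unfolding smooth_divisor_def dn
  proof (intro allI impI)
    fix p al be
    assume hp: "p \<noteq> 0 \<and> evalf 2 Q p = 0 \<and> evalf (n+2) F p = 0"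
    assume hv: "al *s grad_form 2 Q p + be *s grad_form (n + 2) F p = 0"
    have lin: "al * DQs (Phi p) k + be * Dg a b c e n (Phi p) k = 0" for k
    proof -
      define h where "h = Phii k"
      have "0 = (\<Sum>i\<in>UNIV. (al *s grad_form 2 Q p + be *s grad_form (n + 2) F p) $ i * h $ i)"
        unfolding hv by simp
      also have "\<dots> = al * (\<Sum>i\<in>UNIV. grad_form 2 Q p $ i * h $ i) + be * (\<Sum>i\<in>UNIV. grad_form (n+2) F p $ i * h $ i)"
        by (simp add: sum_distrib_left sum.distrib algebra_simps)
      also have "\<dots> = al * DQs (Phi p) k + be * Dg a b c e n (Phi p) k"
        unfolding DQ' DF h_def PP1 by (rule refl)
      finally show ?thesis by simp
    qed
    show "al = 0 \<and> be = 0"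
    proof (rule std_smooth[OF par])
      show "Phi p \<noteq> 0" using hp P0 by blast
      show "std_cone (Phi p) = 0" using hp Pcone by simp
      show "gstd a b c e n (Phi p) = 0" using hp Fev by simp
      show "\<And>k. al * DQs (Phi p) k + be * Dg a b c e n (Phi p) k = 0" by (rule lin)
    qed
  qed
  have Fv: "evalf d F v \<noteq> 0" using cv0 unfolding dn Fev Pv by (simp add: gstd_def)
  have Fq: "evalf d F q \<noteq> 0" unfolding dn Fev Pq by (simp add: gstd_def)
  define p0 where "p0 = (- 1 / cv) *s v + 1 *s q"
  have Pp0: "Phi p0 = mk4 lam 0 0 0" unfolding p0_def Plin2 Pv Pq using cv0 by (simp add: vec4_eq_iff)
  have p0span: "p0 \<in> span_line v q" unfolding span_line_def p0_def by blast
  have p0nz: "p0 \<noteq> 0"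
  proof
    assume "p0 = 0" then have "Phi p0 = 0" by (simp add: Phi_def mv_zero)
    then show False using Pp0 lam0 by (simp add: vec4_eq_iff)
  qed
  have p0Q: "evalf 2 Q p0 = 0" using Pcone[of p0] Pp0 by (simp add: std_cone_def)
  have p0F: "evalf d F p0 = 0" unfolding dn Fev Pp0 by (simp add: gstd_def)
  have uniq: "proportional p' p0" if sp: "p' \<in> span_line v q" and nzp: "p' \<noteq> 0" and evp: "evalf d F p' = 0" for p'
  proof -
    obtain a' b' where p': "p' = a' *s v + b' *s q" using sp unfolding span_line_def by blast
    have Pp': "Phi p' = mk4 (b' * lam) 0 0 (a' * cv + b')" unfolding p' Plin2 Pv Pq by (simp add: vec4_eq_iff)
    have "(a' * cv + b')^(n+2) = 0" using evp unfolding dn Fev Pp' by (simp add: gstd_def)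
    then have "a' * cv + b' = 0" by auto
    then have b': "b' = - (a' * cv)" by (simp add: add_eq_0_iff add.commute)
    have a'0: "a' \<noteq> 0"
    proof
      assume "a' = 0" then have "p' = 0" using b' p' by (simp add: vec_eq_iff)
      then show False using nzp by simp
    qed
    have "p' = (- (a' * cv)) *s p0" using cv0 by (simp add: p' b' p0_def vec_eq_iff field_simps)
    then show ?thesis unfolding proportional_def using a'0 cv0
      by (intro exI[of _ "- (a' * cv)"]) simp
  qed
  show ?thesis
    using Fform smooth Fv Fq p0span p0nz p0Q p0F uniq unfolding dn by blast
qed


end
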